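(* Let $\mu\in V_n$ be an associative algebra such that there exists $[\lambda]\in\mathrm{GL}(n).[\mu]$ with $\mathrm M_\lambda$ negative definite. Then $\mu$ is semisimple.
   Context: $V_n$ is the space of bilinear maps $\mu:\mathbb C^n\times\mathbb C^n\to\mathbb C^n$ with $\mathrm{GL}(n)$-action $g.\mu(X,Y)=g\mu(g^{-1}X,g^{-1}Y)$ and the standard Hermitian inner product on $\mathbb C^n$. $L^\lambda_XY=\lambda(X,Y)$, $R^\lambda_XY=\lambda(Y,X)$, and for an orthonormal basis $\{X_i\}$, $\mathrm M_\lambda=2\sum_i L^\lambda_{X_i}(L^\lambda_{X_i})^*-2\sum_i (L^\lambda_{X_i})^*L^\lambda_{X_i}-2\sum_i (R^\lambda_{X_i})^*R^\lambda_{X_i}$. An associative algebra is semisimple if its radical (largest nilpotent ideal) is zero. *)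

theory Defs
  imports "HOL-Analysis.Analysis"
begin

type_synonym 'n bilin = "complex^'n \<Rightarrow> complex^'n \<Rightarrow> complex^'n"

definition clinear_vec :: "(complex^'n \<Rightarrow> complex^'m) \<Rightarrow> bool" where
  "clinear_vec f \<longleftrightarrow> (\<forall>x y. f (x + y) = f x + f y) \<and> (\<forall>c x. f (c *s x) = c *s f x)"

definition bilin_map :: "'n::finite bilin \<Rightarrow> bool" where
  "bilin_map \<mu> \<longleftrightarrow> (\<forall>x. clinear_vec (\<mu> x)) \<and> (\<forall>y. clinear_vec (\<lambda>x. \<mu> x y))"

definition assoc_alg :: "'n::finite bilin \<Rightarrow> bool" where
  "assoc_alg \<mu> \<longleftrightarrow> (\<forall>x y z. \<mu> (\<mu> x y) z = \<mu> x (\<mu> y z))"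

definition gl_act :: "complex^'n^'n \<Rightarrow> 'n::finite bilin \<Rightarrow> 'n bilin" where
  "gl_act g \<mu> = (\<lambda>X Y. g *v \<mu> (matrix_inv g *v X) (matrix_inv g *v Y))"

text \<open>[lambda] in GL(n).[mu] (orbit in projective space).\<close>
definition in_proj_orbit :: "'n::finite bilin \<Rightarrow> 'n bilin \<Rightarrow> bool" where
  "in_proj_orbit lam \<mu> \<longleftrightarrow> lam \<noteq> (\<lambda>X Y. 0) \<and>
     (\<exists>g c. invertible g \<and> c \<noteq> 0 \<and> lam = (\<lambda>X Y. c *s gl_act g \<mu> X Y))"

text \<open>Matrices (w.r.t. the standard basis) of L_X Y = lambda(X,Y), R_X Y = lambda(Y,X).\<close>
definition Lmat :: "'n::finite bilin \<Rightarrow> complex^'n \<Rightarrow> complex^'n^'n" where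
  "Lmat lam X = (\<chi> k j. (lam X (axis j 1)) $ k)"

definition Rmat :: "'n::finite bilin \<Rightarrow> complex^'n \<Rightarrow> complex^'n^'n" where
  "Rmat lam X = (\<chi> k j. (lam (axis j 1) X) $ k)"

definition adj :: "complex^'n^'m \<Rightarrow> complex^'m^'n" where
  "adj A = (\<chi> i j. cnj (A $ j $ i))"

definition Mmat :: "'n::finite bilin \<Rightarrow> complex^'n^'n" where
  "Mmat lam = (\<Sum>i\<in>UNIV. 2 *\<^sub>R (Lmat lam (axis i 1) ** adj (Lmat lam (axis i 1)))
                     - 2 *\<^sub>R (adj (Lmat lam (axis i 1)) ** Lmat lam (axis i 1))
                     - 2 *\<^sub>R (adj (Rmat lam (axis i 1)) ** Rmat lam (axis i 1)))"

definition herm_form :: "complex^'n^'n \<Rightarrow> complex^'n \<Rightarrow> complex" where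
  "herm_form A x = (\<Sum>i\<in>UNIV. \<Sum>j\<in>UNIV. cnj (x $ i) * A $ i $ j * x $ j)"

definition neg_definite :: "complex^'n^'n \<Rightarrow> bool" where
  "neg_definite A \<longleftrightarrow> adj A = A \<and> (\<forall>x. x \<noteq> 0 \<longrightarrow> Re (herm_form A x) < 0)"

definition is_ideal :: "'n::finite bilin \<Rightarrow> (complex^'n) set \<Rightarrow> bool" where
  "is_ideal \<mu> I \<longleftrightarrow> 0 \<in> I \<and> (\<forall>x\<in>I. \<forall>y\<in>I. x + y \<in> I) \<and> (\<forall>c. \<forall>x\<in>I. c *s x \<in> I)
     \<and> (\<forall>a. \<forall>x\<in>I. \<mu> a x \<in> I \<and> \<mu> x a \<in> I)"

fun mprod :: "'n::finite bilin \<Rightarrow> (complex^'n) list \<Rightarrow> complex^'n" where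
  "mprod \<mu> [] = 0"
| "mprod \<mu> [x] = x"
| "mprod \<mu> (x # y # xs) = \<mu> x (mprod \<mu> (y # xs))"

definition nilpotent_ideal :: "'n::finite bilin \<Rightarrow> (complex^'n) set \<Rightarrow> bool" where
  "nilpotent_ideal \<mu> I \<longleftrightarrow> is_ideal \<mu> I \<and>
     (\<exists>k\<ge>1. \<forall>xs. length xs = k \<and> set xs \<subseteq> I \<longrightarrow> mprod \<mu> xs = 0)"

text \<open>Radical = largest nilpotent ideal; it is zero iff every nilpotent ideal is zero.\<close>
definition semisimple :: "'n::finite bilin \<Rightarrow> bool" where
  "semisimple \<mu> \<longleftrightarrow> (\<forall>I. nilpotent_ideal \<mu> I \<longrightarrow> I = {0})"

end

theory Submission
  imports Defs
begin

abbreviation ee :: "'n::finite \<Rightarrow> complex^'n" where "ee j \<equiv> axis j 1"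

lemma clv_0: "clinear_vec f \<Longrightarrow> f 0 = 0"
  unfolding clinear_vec_def by (metis add_cancel_right_right add_0)

lemma clv_sum: assumes "clinear_vec f" shows "f (sum g S) = (\<Sum>i\<in>S. f (g i))"
proof (cases "finite S")
  case True then show ?thesis
    by (induction S rule: finite_induct) (use assms in \<open>auto simp: clv_0 clinear_vec_def\<close>)
next
  case False then show ?thesis using clv_0[OF assms] by simp
qed

lemma clv_expand: assumes "clinear_vec f" shows "f x = (\<Sum>j\<in>UNIV. (x$j) *s f (ee j))"
proof -
  have "f x = f (\<Sum>j\<in>UNIV. x $ j *s ee j)" by (simp add: basis_expansion)
  also have "\<dots> = (\<Sum>j\<in>UNIV. (x$j) *s f (ee j))"
    using assms by (simp add: clv_sum clinear_vec_def)
  finally show ?thesis .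
qed

lemma hf_add: "herm_form (A + B) x = herm_form A x + herm_form B x"
  unfolding herm_form_def by (simp add: distrib_left distrib_right sum.distrib)
lemma hf_diff: "herm_form (A - B) x = herm_form A x - herm_form B x"
  unfolding herm_form_def by (simp add: left_diff_distrib right_diff_distrib sum_subtractf)
lemma hf_scaleR: "herm_form (r *\<^sub>R A) x = of_real r * herm_form A x"
proof -
  have c: "r *\<^sub>R (z::complex) = of_real r * z" for z by (simp add: scaleR_conv_of_real)
  have e: "(r *\<^sub>R A)$i$j = of_real r * A$i$j" for i j
    by (simp add: c)
  show ?thesis unfolding herm_form_def e by (simp add: sum_distrib_left mult_ac)
qed
lemma hf_zero: "herm_form 0 x = 0"
  unfolding herm_form_def by simp
lemma hf_sum: "herm_form (\<Sum>i\<in>S. A i) x = (\<Sum>i\<in>S. herm_form (A i) x)"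
proof (cases "finite S")
  case True then show ?thesis
    by (induction S rule: finite_induct) (auto simp: hf_zero hf_add)
qed (simp add: hf_zero)

lemma hf_AAadj: "herm_form (A ** adj A) x = (\<Sum>k\<in>UNIV. of_real ((cmod (\<Sum>j\<in>UNIV. cnj (A$j$k) * x$j))\<^sup>2))"
proof -
  define u where "u k = (\<Sum>j\<in>UNIV. cnj (A$j$k) * x$j)" for k
  have cu: "cnj (u k) = (\<Sum>i\<in>UNIV. A$i$k * cnj (x$i))" for k
    unfolding u_def by simp
  have "herm_form (A ** adj A) x = (\<Sum>i\<in>UNIV. \<Sum>j\<in>UNIV. cnj (x$i) * (\<Sum>k\<in>UNIV. A$i$k * cnj (A$j$k)) * x$j)"
    unfolding herm_form_def by (simp add: matrix_matrix_mult_def adj_def)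
  also have "\<dots> = (\<Sum>i\<in>UNIV. \<Sum>j\<in>UNIV. \<Sum>k\<in>UNIV. (A$i$k * cnj (x$i)) * (cnj (A$j$k) * x$j))"
    by (simp add: sum_distrib_left sum_distrib_right mult_ac)
  also have "\<dots> = (\<Sum>i\<in>UNIV. \<Sum>k\<in>UNIV. \<Sum>j\<in>UNIV. (A$i$k * cnj (x$i)) * (cnj (A$j$k) * x$j))"
    by (rule sum.cong[OF refl], rule sum.swap)
  also have "\<dots> = (\<Sum>k\<in>UNIV. \<Sum>i\<in>UNIV. \<Sum>j\<in>UNIV. (A$i$k * cnj (x$i)) * (cnj (A$j$k) * x$j))"
    by (rule sum.swap)
  also have "\<dots> = (\<Sum>k\<in>UNIV. cnj (u k) * u k)"
    unfolding cu u_def by (simp add: sum_product)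
  also have "\<dots> = (\<Sum>k\<in>UNIV. of_real ((cmod (u k))\<^sup>2))"
    by (rule sum.cong[OF refl]) (metis complex_norm_square mult.commute of_real_power)
  finally show ?thesis unfolding u_def .
qed

lemma hf_adjAA: "herm_form (adj A ** A) x = (\<Sum>k\<in>UNIV. of_real ((cmod ((A *v x)$k))\<^sup>2))"
proof -
  define u where "u k = (\<Sum>j\<in>UNIV. A$k$j * x$j)" for k
  have cu: "cnj (u k) = (\<Sum>i\<in>UNIV. cnj (A$k$i) * cnj (x$i))" for k
    unfolding u_def by simp
  have "herm_form (adj A ** A) x = (\<Sum>i\<in>UNIV. \<Sum>j\<in>UNIV. cnj (x$i) * (\<Sum>k\<in>UNIV. cnj (A$k$i) * A$k$j) * x$j)"
    unfolding herm_form_def by (simp add: matrix_matrix_mult_def adj_def)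
  also have "\<dots> = (\<Sum>i\<in>UNIV. \<Sum>j\<in>UNIV. \<Sum>k\<in>UNIV. (cnj (A$k$i) * cnj (x$i)) * (A$k$j * x$j))"
    by (simp add: sum_distrib_left sum_distrib_right mult_ac)
  also have "\<dots> = (\<Sum>i\<in>UNIV. \<Sum>k\<in>UNIV. \<Sum>j\<in>UNIV. (cnj (A$k$i) * cnj (x$i)) * (A$k$j * x$j))"
    by (rule sum.cong[OF refl], rule sum.swap)
  also have "\<dots> = (\<Sum>k\<in>UNIV. \<Sum>i\<in>UNIV. \<Sum>j\<in>UNIV. (cnj (A$k$i) * cnj (x$i)) * (A$k$j * x$j))"
    by (rule sum.swap)
  also have "\<dots> = (\<Sum>k\<in>UNIV. cnj (u k) * u k)"
    unfolding cu u_def by (simp add: sum_product)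
  also have "\<dots> = (\<Sum>k\<in>UNIV. of_real ((cmod (u k))\<^sup>2))"
    by (rule sum.cong[OF refl]) (metis complex_norm_square mult.commute of_real_power)
  finally show ?thesis unfolding u_def by (simp add: matrix_vector_mult_def)
qed
lemma norm_sq_vec: "(norm (w::complex^'n))\<^sup>2 = (\<Sum>k\<in>UNIV. (cmod (w$k))\<^sup>2)"
  by (simp add: norm_vec_def L2_set_def sum_nonneg)

lemma cmod_inner: "(cmod (\<Sum>j\<in>UNIV. cnj (v$j) * x$j))\<^sup>2 = (v \<bullet> x)\<^sup>2 + ((\<i> *s v) \<bullet> x)\<^sup>2"
proof -
  have "Re (\<Sum>j\<in>UNIV. cnj (v$j) * x$j) = v \<bullet> x"
    by (simp add: inner_vec_def inner_complex_def)
  moreover have "Im (\<Sum>j\<in>UNIV. cnj (v$j) * x$j) = (\<i> *s v) \<bullet> x"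
    by (simp add: inner_vec_def inner_complex_def sum_subtractf algebra_simps)
  ultimately show ?thesis by (simp add: cmod_power2)
qed

lemma Lmat_mv: assumes "clinear_vec (lam X)" shows "Lmat lam X *v x = lam X x"
proof -
  have "lam X x = (\<Sum>j\<in>UNIV. (x$j) *s lam X (ee j))" by (rule clv_expand[OF assms])
  then show ?thesis
    by (simp add: vec_eq_iff matrix_vector_mult_def Lmat_def sum_component mult.commute)
qed

lemma Rmat_mv: assumes "clinear_vec (\<lambda>y. lam y X)" shows "Rmat lam X *v x = lam x X"
proof -
  have "(\<lambda>y. lam y X) x = (\<Sum>j\<in>UNIV. (x$j) *s (\<lambda>y. lam y X) (ee j))" by (rule clv_expand[OF assms])
  then have "lam x X = (\<Sum>j\<in>UNIV. (x$j) *s lam (ee j) X)" by simp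
  then show ?thesis
    by (simp add: vec_eq_iff matrix_vector_mult_def Rmat_def sum_component mult.commute)
qed

lemma Basis_cvec: "(Basis :: (complex^'n) set) = (\<Union>i\<in>UNIV. {axis i 1, axis i \<i>})"
  by (auto simp: Basis_vec_def Basis_complex_def)

lemma sumB: fixes g :: "complex^'n \<Rightarrow> real"
  shows "(\<Sum>b\<in>Basis. g b) = (\<Sum>j\<in>UNIV. g (axis j 1) + g (axis j \<i>))"
proof -
  have "(\<Sum>b\<in>Basis. g b) = (\<Sum>j\<in>UNIV. sum g {axis j 1, axis j \<i>})"
    unfolding Basis_cvec
    by (rule sum.UNION_disjoint) (auto simp: axis_eq_axis)
  also have "\<dots> = (\<Sum>j\<in>UNIV. g (axis j 1) + g (axis j \<i>))"
    by (rule sum.cong) (auto simp: axis_eq_axis)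
  finally show ?thesis .
qed

lemma axis_ii: "axis j \<i> = \<i> *s (ee j)"
  by (simp add: vec_eq_iff axis_def)

lemma norm_ii: "norm (\<i> *s (v::complex^'n)) = norm v"
  by (simp add: norm_vec_def norm_mult)

lemma inner_neg_sq: "((- v) \<bullet> x)\<^sup>2 = ((v::complex^'n) \<bullet> x)\<^sup>2"
  by simp

lemma ii_ii: "\<i> *s (\<i> *s (v::complex^'n)) = - v"
  by (simp add: vec_eq_iff)

lemma bil_scL: "bilin_map lam \<Longrightarrow> lam (c *s a) b = c *s lam a b"
  unfolding bilin_map_def clinear_vec_def by blast
lemma bil_scR: "bilin_map lam \<Longrightarrow> lam a (c *s b) = c *s lam a b"
  unfolding bilin_map_def clinear_vec_def by blast

definition S1 :: "(complex^'n) set \<Rightarrow> 'n::finite bilin \<Rightarrow> complex^'n \<Rightarrow> real" where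
  "S1 B lam x = (\<Sum>b\<in>B. \<Sum>c\<in>B. (lam b c \<bullet> x)\<^sup>2)"
definition S2 :: "(complex^'n) set \<Rightarrow> 'n::finite bilin \<Rightarrow> complex^'n \<Rightarrow> real" where
  "S2 B lam x = (\<Sum>b\<in>B. (norm (lam b x))\<^sup>2)"
definition S3 :: "(complex^'n) set \<Rightarrow> 'n::finite bilin \<Rightarrow> complex^'n \<Rightarrow> real" where
  "S3 B lam x = (\<Sum>b\<in>B. (norm (lam x b))\<^sup>2)"

lemma formula:
  fixes lam :: "'n::finite bilin"
  assumes bl: "bilin_map lam"
  shows "Re (herm_form (Mmat lam) x) = S1 Basis lam x - S2 Basis lam x - S3 Basis lam x"
proof -
  define Q where "Q i = (\<Sum>k\<in>UNIV. (lam (ee i) (ee k) \<bullet> x)\<^sup>2 + ((\<i> *s lam (ee i) (ee k)) \<bullet> x)\<^sup>2)" for i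
  have cL: "clinear_vec (lam X)" for X using bl unfolding bilin_map_def by blast
  have cR: "clinear_vec (\<lambda>y. lam y X)" for X using bl unfolding bilin_map_def by blast
  have h1: "Re (herm_form (Lmat lam (ee i) ** adj (Lmat lam (ee i))) x) = Q i" for i
    unfolding hf_AAadj Re_sum Q_def
    by (simp add: Lmat_def cmod_inner[symmetric])
  have h2: "Re (herm_form (adj (Lmat lam (ee i)) ** Lmat lam (ee i)) x) = (norm (lam (ee i) x))\<^sup>2" for i
    unfolding hf_adjAA Re_sum Lmat_mv[OF cL] norm_sq_vec by simp
  have h3: "Re (herm_form (adj (Rmat lam (ee i)) ** Rmat lam (ee i)) x) = (norm (lam x (ee i)))\<^sup>2" for i
    unfolding hf_adjAA Re_sum Rmat_mv[OF cR] norm_sq_vec by simp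
  have lhs: "Re (herm_form (Mmat lam) x) = (\<Sum>i\<in>UNIV. 2 * Q i - 2 * (norm (lam (ee i) x))\<^sup>2 - 2 * (norm (lam x (ee i)))\<^sup>2)"
    unfolding Mmat_def hf_sum Re_sum hf_diff hf_scaleR
    by (simp add: h1 h2 h3)
  have s2: "S2 Basis lam x = (\<Sum>i\<in>UNIV. 2 * (norm (lam (ee i) x))\<^sup>2)"
    unfolding S2_def sumB axis_ii by (simp add: bil_scL[OF bl] norm_ii)
  have s3: "S3 Basis lam x = (\<Sum>i\<in>UNIV. 2 * (norm (lam x (ee i)))\<^sup>2)"
    unfolding S3_def sumB axis_ii by (simp add: bil_scR[OF bl] norm_ii)
  have inner1: "(\<Sum>c\<in>Basis. (lam (ee i) c \<bullet> x)\<^sup>2) = Q i" for i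
    unfolding sumB axis_ii Q_def by (simp add: bil_scR[OF bl])
  have inner2: "(\<Sum>c\<in>Basis. (lam (axis i \<i>) c \<bullet> x)\<^sup>2) = Q i" for i
    unfolding sumB axis_ii Q_def by (simp add: bil_scR[OF bl] bil_scL[OF bl] ii_ii add.commute)
  have s1: "S1 Basis lam x = (\<Sum>i\<in>UNIV. 2 * Q i)"
    unfolding S1_def sumB[of "\<lambda>b. \<Sum>c\<in>Basis. (lam b c \<bullet> x)\<^sup>2"] inner1 inner2 by simp
  show ?thesis unfolding lhs s1 s2 s3 by (simp add: sum_subtractf)
qed


definition parseval :: "'a::euclidean_space set \<Rightarrow> bool" where
  "parseval B \<longleftrightarrow> finite B \<and> (\<forall>v. (\<Sum>b\<in>B. (v \<bullet> b)\<^sup>2) = v \<bullet> v)"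

lemma parseval_Basis: "parseval (Basis::'a::euclidean_space set)"
  unfolding parseval_def power2_eq_square by (simp add: euclidean_inner[symmetric])

lemma parseval_adj:
  fixes T :: "'a::euclidean_space \<Rightarrow> 'b::euclidean_space"
  assumes lT: "linear T" and pB: "parseval B"
  shows "(\<Sum>b\<in>B. (norm (T b))\<^sup>2) = (\<Sum>w\<in>Basis. (norm (adjoint T w))\<^sup>2)"
proof -
  have "(\<Sum>b\<in>B. (norm (T b))\<^sup>2) = (\<Sum>b\<in>B. \<Sum>w\<in>Basis. (T b \<bullet> w)\<^sup>2)"
    using parseval_Basis[where 'a='b] by (simp add: parseval_def power2_norm_eq_inner)
  also have "\<dots> = (\<Sum>b\<in>B. \<Sum>w\<in>Basis. (b \<bullet> adjoint T w)\<^sup>2)"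
    by (simp add: adjoint_works[OF lT])
  also have "\<dots> = (\<Sum>w\<in>Basis. \<Sum>b\<in>B. (b \<bullet> adjoint T w)\<^sup>2)"
    by (rule sum.swap)
  also have "\<dots> = (\<Sum>w\<in>Basis. \<Sum>b\<in>B. (adjoint T w \<bullet> b)\<^sup>2)"
    by (rule sum.cong[OF refl])+ (rule arg_cong[where f="\<lambda>t. t^2"], rule inner_commute)
  also have "\<dots> = (\<Sum>w\<in>Basis. (norm (adjoint T w))\<^sup>2)"
    using pB by (simp add: parseval_def power2_norm_eq_inner)
  finally show ?thesis .
qed

lemma parseval_inv:
  fixes T :: "'a::euclidean_space \<Rightarrow> 'b::euclidean_space"
  assumes "linear T" "parseval B" "parseval C"
  shows "(\<Sum>b\<in>B. (norm (T b))\<^sup>2) = (\<Sum>c\<in>C. (norm (T c))\<^sup>2)"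
  using parseval_adj[OF assms(1,2)] parseval_adj[OF assms(1,3)] by simp

lemma onb_parseval:
  fixes B :: "'a::euclidean_space set"
  assumes "finite B" "pairwise orthogonal B" "\<And>b. b \<in> B \<Longrightarrow> norm b = 1" "v \<in> span B"
  shows "(\<Sum>b\<in>B. (v \<bullet> b)\<^sup>2) = v \<bullet> v"
proof -
  have "v \<bullet> v = v \<bullet> (\<Sum>b\<in>B. (v \<bullet> b) *\<^sub>R b)"
    using orthonormal_basis_expand[OF assms(2,3,4,1)] by simp
  also have "\<dots> = (\<Sum>b\<in>B. (v \<bullet> b)\<^sup>2)"
    by (simp add: inner_sum_right power2_eq_square)
  finally show ?thesis by simp
qed

lemma adapted:
  fixes J :: "'a::euclidean_space set"
  assumes J: "subspace J"
  obtains B1 B2 where "finite B1" "finite B2" "B1 \<subseteq> J" "span B1 = J" "B1 \<inter> B2 = {}"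
    "\<And>x. x \<in> B1 \<Longrightarrow> norm x = 1"
    "\<And>v. v \<in> J \<Longrightarrow> (\<Sum>b\<in>B1. (v \<bullet> b)\<^sup>2) = v \<bullet> v" "parseval (B1 \<union> B2)"
proof -
  obtain B1 where B1: "B1 \<subseteq> J" "pairwise orthogonal B1" "\<And>x. x \<in> B1 \<Longrightarrow> norm x = 1"
    "independent B1" "span B1 = J"
    using orthonormal_basis_subspace[OF J] by metis
  have fB1: "finite B1" using B1(4) independent_imp_finite by blast
  define K where "K = {y. \<forall>x\<in>J. orthogonal x y}"
  have K: "subspace K" unfolding K_def by (rule subspace_orthogonal_to_vectors)
  obtain B2 where B2: "B2 \<subseteq> K" "pairwise orthogonal B2" "\<And>x. x \<in> B2 \<Longrightarrow> norm x = 1"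
    "independent B2" "span B2 = K"
    using orthonormal_basis_subspace[OF K] by metis
  have fB2: "finite B2" using B2(4) independent_imp_finite by blast
  have disj: "B1 \<inter> B2 = {}"
  proof (rule ccontr)
    assume "B1 \<inter> B2 \<noteq> {}"
    then obtain b where "b \<in> B1" "b \<in> B2" by blast
    then have "b \<in> J" "b \<in> K" "norm b = 1" using B1 B2 by auto
    then have "b \<bullet> b = 0" unfolding K_def orthogonal_def by blast
    with \<open>norm b = 1\<close> show False by (simp add: norm_eq_sqrt_inner)
  qed
  have P1: "(\<Sum>b\<in>B1. (v \<bullet> b)\<^sup>2) = v \<bullet> v" if "v \<in> J" for v
    using onb_parseval[OF fB1 B1(2) B1(3)] that B1(5) by blast
  have P2: "(\<Sum>b\<in>B2. (v \<bullet> b)\<^sup>2) = v \<bullet> v" if "v \<in> K" for v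
    using onb_parseval[OF fB2 B2(2) B2(3)] that B2(5) by blast
  have "parseval (B1 \<union> B2)"
    unfolding parseval_def
  proof (intro conjI allI)
    show "finite (B1 \<union> B2)" using fB1 fB2 by simp
    fix v
    obtain y z where yz: "y \<in> span J" "\<And>w. w \<in> span J \<Longrightarrow> orthogonal z w" "v = y + z"
      using orthogonal_subspace_decomp_exists[of J v] by blast
    have y: "y \<in> J" using yz(1) J by (metis span_eq_iff)
    have z: "z \<in> K" unfolding K_def using yz(2) span_base orthogonal_commute by blast
    have yzo: "y \<bullet> z = 0" using z y unfolding K_def orthogonal_def by blast
    have a: "(\<Sum>b\<in>B1. (v \<bullet> b)\<^sup>2) = y \<bullet> y"
    proof -
      have "(\<Sum>b\<in>B1. (v \<bullet> b)\<^sup>2) = (\<Sum>b\<in>B1. (y \<bullet> b)\<^sup>2)"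
      proof (rule sum.cong[OF refl])
        fix b assume "b \<in> B1"
        then have "b \<bullet> z = 0" using z B1(1) unfolding K_def orthogonal_def by blast
        then have "z \<bullet> b = 0" by (simp only: inner_commute)
        then show "(v \<bullet> b)\<^sup>2 = (y \<bullet> b)\<^sup>2" using yz(3) by (simp add: inner_add_left)
      qed
      then show ?thesis using P1[OF y] by simp
    qed
    have b: "(\<Sum>b\<in>B2. (v \<bullet> b)\<^sup>2) = z \<bullet> z"
    proof -
      have "(\<Sum>b\<in>B2. (v \<bullet> b)\<^sup>2) = (\<Sum>b\<in>B2. (z \<bullet> b)\<^sup>2)"
      proof (rule sum.cong[OF refl])
        fix b assume "b \<in> B2"
        then have "y \<bullet> b = 0" using y B2(1) unfolding K_def orthogonal_def by blast
        then show "(v \<bullet> b)\<^sup>2 = (z \<bullet> b)\<^sup>2" using yz(3) by (simp add: inner_add_left)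
      qed
      then show ?thesis using P2[OF z] by simp
    qed
    have vv: "v \<bullet> v = y \<bullet> y + z \<bullet> z"
      using yz(3) yzo inner_commute[of z y] by (simp add: inner_add_left inner_add_right)
    show "(\<Sum>b\<in>B1 \<union> B2. (v \<bullet> b)\<^sup>2) = v \<bullet> v"
      using a b vv disj fB1 fB2 by (simp add: sum.union_disjoint)
  qed
  then show ?thesis using that fB1 fB2 B1 disj P1 by blast
qed


lemma scR_vec: "r *\<^sub>R (v::complex^'n) = complex_of_real r *s v"
proof -
  have c: "r *\<^sub>R (z::complex) = of_real r * z" for z by (simp add: scaleR_conv_of_real)
  show ?thesis unfolding vec_eq_iff by (simp add: c)
qed

lemma bil_lin1: assumes "bilin_map lam" shows "linear (\<lambda>b. lam b x)"
proof -
  have c: "clinear_vec (\<lambda>b. lam b x)" using assms unfolding bilin_map_def by blast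
  show ?thesis
    by (rule linearI) (use c in \<open>auto simp: clinear_vec_def scR_vec\<close>)
qed

lemma bil_lin2: assumes "bilin_map lam" shows "linear (\<lambda>b. lam x b)"
proof -
  have c: "clinear_vec (lam x)" using assms unfolding bilin_map_def by blast
  show ?thesis
    by (rule linearI) (use c in \<open>auto simp: clinear_vec_def scR_vec\<close>)
qed

lemma lin_inner: assumes "linear f" shows "linear (\<lambda>b. f b \<bullet> x)"
proof -
  interpret linear f by fact
  show ?thesis by (rule linearI) (simp_all add: add inner_add_left scale)
qed

lemma sq_norm_real: "(norm (r::real))\<^sup>2 = r\<^sup>2" by simp

lemma S_inv:
  assumes bl: "bilin_map lam" and pB: "parseval B"
  shows "S1 Basis lam x = S1 B lam x" "S2 Basis lam x = S2 B lam x" "S3 Basis lam x = S3 B lam x"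
proof -
  have pb: "parseval (Basis :: (complex^'n) set)" by (rule parseval_Basis)
  have i1: "(\<Sum>c\<in>Basis. (lam b c \<bullet> x)\<^sup>2) = (\<Sum>c\<in>B. (lam b c \<bullet> x)\<^sup>2)" for b
    using parseval_inv[OF lin_inner[OF bil_lin2[OF bl]] pb pB, of b x] by simp
  have i2: "(\<Sum>b\<in>Basis. (lam b c \<bullet> x)\<^sup>2) = (\<Sum>b\<in>B. (lam b c \<bullet> x)\<^sup>2)" for c
    using parseval_inv[OF lin_inner[OF bil_lin1[OF bl]] pb pB, of c x] by simp
  have "S1 Basis lam x = (\<Sum>b\<in>Basis. \<Sum>c\<in>B. (lam b c \<bullet> x)\<^sup>2)"
    unfolding S1_def i1 ..
  also have "\<dots> = (\<Sum>c\<in>B. \<Sum>b\<in>Basis. (lam b c \<bullet> x)\<^sup>2)" by (rule sum.swap)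
  also have "\<dots> = (\<Sum>c\<in>B. \<Sum>b\<in>B. (lam b c \<bullet> x)\<^sup>2)" unfolding i2 ..
  also have "\<dots> = S1 B lam x" unfolding S1_def by (rule sum.swap)
  finally show "S1 Basis lam x = S1 B lam x" .
  show "S2 Basis lam x = S2 B lam x"
    unfolding S2_def by (rule parseval_inv[OF bil_lin1[OF bl] pb pB])
  show "S3 Basis lam x = S3 B lam x"
    unfolding S3_def by (rule parseval_inv[OF bil_lin2[OF bl] pb pB])
qed

lemma core:
  fixes lam :: "'n::finite bilin"
  assumes bl: "bilin_map lam"
    and nd: "\<And>x. x \<noteq> 0 \<Longrightarrow> Re (herm_form (Mmat lam) x) < 0"
    and J: "subspace J" and x0: "x0 \<in> J" "x0 \<noteq> 0"
    and idl: "\<And>a x. x \<in> J \<Longrightarrow> lam a x \<in> J \<and> lam x a \<in> J"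
    and sq: "\<And>x y. x \<in> J \<Longrightarrow> y \<in> J \<Longrightarrow> lam x y = 0"
  shows False
proof -
  obtain B1 B2 where fB1: "finite B1" and fB2: "finite B2" and B1J: "B1 \<subseteq> J" and sB1: "span B1 = J"
    and disj: "B1 \<inter> B2 = {}" and n1: "\<And>x. x \<in> B1 \<Longrightarrow> norm x = 1"
    and P1: "\<And>v. v \<in> J \<Longrightarrow> (\<Sum>b\<in>B1. (v \<bullet> b)\<^sup>2) = v \<bullet> v"
    and pB: "parseval (B1 \<union> B2)"
    using adapted[OF J] by metis
  define B where "B = B1 \<union> B2"
  have ne: "B1 \<noteq> {}" using sB1 x0 by auto
  define G where "G x = S1 B lam x - S2 B lam x - S3 B lam x" for x
  have neg: "(\<Sum>x\<in>B1. G x) < 0"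
  proof -
    have "(\<Sum>x\<in>B1. G x) < (\<Sum>x\<in>B1. 0)"
    proof (rule sum_strict_mono[OF fB1 ne])
      fix x assume "x \<in> B1"
      then have "x \<noteq> 0" using n1 by force
      then have "Re (herm_form (Mmat lam) x) < 0" by (rule nd)
      then show "G x < 0" unfolding G_def formula[OF bl] S_inv[OF bl pB] B_def .
    qed
    then show ?thesis by simp
  qed
  define N where "N v = (\<Sum>x\<in>B1. (v \<bullet> x)\<^sup>2)" for v
  have NJ: "N v = (norm v)\<^sup>2" if "v \<in> J" for v
    unfolding N_def using P1[OF that] by (simp add: power2_norm_eq_inner)
  have N0: "N v \<ge> 0" for v unfolding N_def by (simp add: sum_nonneg)
  have su: "\<And>g. (\<Sum>b\<in>B. g b) = (\<Sum>b\<in>B1. g b) + (\<Sum>b\<in>B2. (g b :: real))"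
    unfolding B_def by (rule sum.union_disjoint[OF fB1 fB2 disj])
  define T12 where "T12 = (\<Sum>b\<in>B1. \<Sum>c\<in>B2. (norm (lam b c))\<^sup>2)"
  define T21 where "T21 = (\<Sum>b\<in>B2. \<Sum>c\<in>B1. (norm (lam b c))\<^sup>2)"
  define T22 where "T22 = (\<Sum>b\<in>B2. \<Sum>c\<in>B2. N (lam b c))"
  have inJ1: "b \<in> B1 \<Longrightarrow> lam b c \<in> J" for b c using B1J idl by blast
  have inJ2: "c \<in> B1 \<Longrightarrow> lam b c \<in> J" for b c using B1J idl by blast
  have z11: "b \<in> B1 \<Longrightarrow> c \<in> B1 \<Longrightarrow> lam b c = 0" for b c using B1J sq by blast
  have A1: "(\<Sum>x\<in>B1. S1 B lam x) = (\<Sum>b\<in>B. \<Sum>c\<in>B. N (lam b c))"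
  proof -
    have "(\<Sum>x\<in>B1. S1 B lam x) = (\<Sum>b\<in>B. \<Sum>x\<in>B1. \<Sum>c\<in>B. (lam b c \<bullet> x)\<^sup>2)"
      unfolding S1_def by (rule sum.swap)
    also have "\<dots> = (\<Sum>b\<in>B. \<Sum>c\<in>B. \<Sum>x\<in>B1. (lam b c \<bullet> x)\<^sup>2)"
      by (rule sum.cong[OF refl], rule sum.swap)
    finally show ?thesis unfolding N_def .
  qed
  have A1': "(\<Sum>b\<in>B. \<Sum>c\<in>B. N (lam b c)) = T12 + T21 + T22"
  proof -
    have "(\<Sum>b\<in>B. \<Sum>c\<in>B. N (lam b c)) =
      (\<Sum>b\<in>B1. \<Sum>c\<in>B1. N (lam b c)) + (\<Sum>b\<in>B1. \<Sum>c\<in>B2. N (lam b c))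
      + ((\<Sum>b\<in>B2. \<Sum>c\<in>B1. N (lam b c)) + (\<Sum>b\<in>B2. \<Sum>c\<in>B2. N (lam b c)))"
      unfolding su sum.distrib by simp
    moreover have "(\<Sum>b\<in>B1. \<Sum>c\<in>B1. N (lam b c)) = 0"
      using z11 by (simp add: N_def)
    moreover have "(\<Sum>b\<in>B1. \<Sum>c\<in>B2. N (lam b c)) = T12"
      unfolding T12_def using inJ1 NJ by simp
    moreover have "(\<Sum>b\<in>B2. \<Sum>c\<in>B1. N (lam b c)) = T21"
      unfolding T21_def using inJ2 NJ by simp
    ultimately show ?thesis unfolding T22_def by simp
  qed
  have A2: "(\<Sum>x\<in>B1. S2 B lam x) = T21"
  proof -
    have "(\<Sum>x\<in>B1. S2 B lam x) = (\<Sum>x\<in>B1. \<Sum>b\<in>B2. (norm (lam b x))\<^sup>2)"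
      unfolding S2_def su using z11 by simp
    also have "\<dots> = T21" unfolding T21_def by (rule sum.swap)
    finally show ?thesis .
  qed
  have A3: "(\<Sum>x\<in>B1. S3 B lam x) = T12"
    unfolding S3_def su T12_def using z11 by simp
  have "(\<Sum>x\<in>B1. G x) = T22"
    unfolding G_def sum_subtractf A1 A1' A2 A3 by simp
  moreover have "T22 \<ge> 0" unfolding T22_def using N0 by (simp add: sum_nonneg)
  ultimately show False using neg by simp
qed


lemma mprod_Cons: "xs \<noteq> [] \<Longrightarrow> mprod mu (y # xs) = mu y (mprod mu xs)"
  by (cases xs) auto

lemma mprod_snoc:
  assumes as: "assoc_alg mu" shows "xs \<noteq> [] \<Longrightarrow> mprod mu (xs @ [y]) = mu (mprod mu xs) y"
proof (induction xs)
  case Nil then show ?case by simp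
next
  case (Cons a xs)
  show ?case
  proof (cases "xs = []")
    case True then show ?thesis by simp
  next
    case False
    then have "mprod mu ((a # xs) @ [y]) = mu a (mprod mu (xs @ [y]))"
      by (simp add: mprod_Cons)
    also have "\<dots> = mu a (mu (mprod mu xs) y)" using Cons.IH False by simp
    also have "\<dots> = mu (mu a (mprod mu xs)) y" using as unfolding assoc_alg_def by simp
    also have "\<dots> = mu (mprod mu (a # xs)) y" using False by (simp add: mprod_Cons)
    finally show ?thesis .
  qed
qed

lemma mprod_in:
  assumes I: "is_ideal mu I" shows "xs \<noteq> [] \<Longrightarrow> set xs \<subseteq> I \<Longrightarrow> mprod mu xs \<in> I"
proof (induction xs)
  case Nil then show ?case by simp
next
  case (Cons a xs)
  show ?case
  proof (cases "xs = []")
    case True then show ?thesis using Cons by simp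
  next
    case False
    then have "mprod mu xs \<in> I" using Cons by simp
    then show ?thesis using False I unfolding is_ideal_def by (simp add: mprod_Cons)
  qed
qed

lemma annih:
  fixes mu :: "'n::finite bilin"
  assumes bl: "bilin_map mu" and as: "assoc_alg mu" and nI: "nilpotent_ideal mu I" and ne: "I \<noteq> {0}"
  shows "\<exists>T. is_ideal mu T \<and> (\<forall>x\<in>T. \<forall>y\<in>T. mu x y = 0) \<and> (\<exists>t\<in>T. t \<noteq> 0)"
proof -
  have I: "is_ideal mu I" using nI unfolding nilpotent_ideal_def by blast
  define Q where "Q k \<longleftrightarrow> 1 \<le> k \<and> (\<forall>xs. length xs = k \<and> set xs \<subseteq> I \<longrightarrow> mprod mu xs = 0)" for k
  have ex: "\<exists>k. Q k" using nI unfolding nilpotent_ideal_def Q_def by blast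
  define k0 where "k0 = (LEAST k. Q k)"
  have Qk0: "Q k0" unfolding k0_def using ex by (metis LeastI)
  obtain x0 where x0: "x0 \<in> I" "x0 \<noteq> 0" using ne I unfolding is_ideal_def by blast
  have "\<not> Q 1" unfolding Q_def using x0 by (auto intro!: exI[of _ "[x0]"])
  then have k2: "k0 \<ge> 2" using Qk0 unfolding Q_def by (metis One_nat_def Suc_1 Suc_leI le_neq_implies_less)
  have "\<not> Q (k0 - 1)" unfolding k0_def by (rule not_less_Least) (use k2 k0_def in simp)
  then obtain xs where xs: "length xs = k0 - 1" "set xs \<subseteq> I" "mprod mu xs \<noteq> 0"
    unfolding Q_def using k2 by auto
  have xsne: "xs \<noteq> []" using xs(1) k2 by auto
  define p where "p = mprod mu xs"
  have pI: "p \<in> I" unfolding p_def by (rule mprod_in[OF I xsne xs(2)])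
  have kz: "mprod mu ys = 0" if "length ys = k0" "set ys \<subseteq> I" for ys
    using Qk0 that unfolding Q_def by blast
  have pl: "mu y p = 0" if "y \<in> I" for y
    using kz[of "y # xs"] xs that xsne k2 by (simp add: p_def mprod_Cons)
  have pr: "mu p y = 0" if "y \<in> I" for y
    using kz[of "xs @ [y]"] xs that xsne k2 by (simp add: p_def mprod_snoc[OF as])
  define T where "T = {x\<in>I. \<forall>y\<in>I. mu x y = 0 \<and> mu y x = 0}"
  have cL: "clinear_vec (mu X)" for X using bl unfolding bilin_map_def by blast
  have cR: "clinear_vec (\<lambda>y. mu y X)" for X using bl unfolding bilin_map_def by blast
  have m0: "mu 0 y = 0" "mu y 0 = 0" for y using clv_0[OF cR] clv_0[OF cL] by auto
  have madd: "mu (x + x') y = mu x y + mu x' y" "mu y (x + x') = mu y x + mu y x'" for x x' y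
    using cL cR unfolding clinear_vec_def by auto
  have msc: "mu (c *s x) y = c *s mu x y" "mu y (c *s x) = c *s mu y x" for c x y
    using cL cR unfolding clinear_vec_def by auto
  have Iax: "\<And>a x. x \<in> I \<Longrightarrow> mu a x \<in> I \<and> mu x a \<in> I" using I unfolding is_ideal_def by blast
  have assoc: "mu (mu x y) z = mu x (mu y z)" for x y z using as unfolding assoc_alg_def by blast
  have "is_ideal mu T"
    unfolding is_ideal_def
  proof (intro conjI ballI allI)
    show "0 \<in> T" unfolding T_def using I m0 unfolding is_ideal_def by auto
    fix x y assume "x \<in> T" "y \<in> T"
    then show "x + y \<in> T" unfolding T_def using I madd unfolding is_ideal_def by auto
  next
    fix c x assume "x \<in> T"
    then show "c *s x \<in> T" unfolding T_def using I msc unfolding is_ideal_def by auto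
  next
    fix a x assume x: "x \<in> T"
    then have xI: "x \<in> I" and xa: "\<And>y. y \<in> I \<Longrightarrow> mu x y = 0 \<and> mu y x = 0" unfolding T_def by auto
    show "mu a x \<in> T" unfolding T_def
      using Iax[OF xI] xa assoc m0 Iax by (auto) (metis assoc)
    show "mu x a \<in> T" unfolding T_def
      using Iax[OF xI] xa assoc m0 Iax by (auto) (metis assoc)
  qed
  moreover have "\<forall>x\<in>T. \<forall>y\<in>T. mu x y = 0" unfolding T_def by auto
  moreover have "p \<in> T" "p \<noteq> 0" unfolding T_def using pI pl pr xs(3) p_def by auto
  ultimately show ?thesis by blast
qed


theorem mainTheorem12:
  fixes \<mu> :: "'n::finite bilin"
  assumes "bilin_map \<mu>"
    and "assoc_alg \<mu>"
    and "\<exists>lam. in_proj_orbit lam \<mu> \<and> neg_definite (Mmat lam)"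
  shows "semisimple \<mu>"
proof -
  note bl = assms(1) and as = assms(2)
  obtain lam where lo: "in_proj_orbit lam \<mu>" and ndf: "neg_definite (Mmat lam)" using assms(3) by blast
  obtain g c where g: "invertible g" and c: "c \<noteq> 0" and lamdef: "lam = (\<lambda>X Y. c *s gl_act g \<mu> X Y)"
    using lo unfolding in_proj_orbit_def by blast
  define gi where "gi = matrix_inv g"
  have gig: "gi ** g = mat 1"
  proof -
    have "\<exists>A'. g ** A' = mat 1 \<and> A' ** g = mat 1" using g unfolding invertible_def by blast
    then have "g ** gi = mat 1 \<and> gi ** g = mat 1" unfolding gi_def matrix_inv_def by (rule someI_ex)
    then show ?thesis by blast
  qed
  have gi_g: "gi *v (g *v t) = t" for t by (simp add: matrix_vector_mul_assoc gig)
  have lam_eq: "lam X Y = g *v (c *s \<mu> (gi *v X) (gi *v Y))" for X Y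
    unfolding lamdef gl_act_def gi_def by (simp add: vector_scalar_commute)
  have cL: "clinear_vec (\<mu> X)" for X using bl unfolding bilin_map_def by blast
  have cR: "clinear_vec (\<lambda>y. \<mu> y X)" for X using bl unfolding bilin_map_def by blast
  have m0: "\<mu> 0 y = 0" "\<mu> y 0 = 0" for y using clv_0[OF cR] clv_0[OF cL] by auto
  have madd: "\<mu> (x + x') y = \<mu> x y + \<mu> x' y" "\<mu> y (x + x') = \<mu> y x + \<mu> y x'" for x x' y
    using cL cR unfolding clinear_vec_def by auto
  have msc: "\<mu> (d *s x) y = d *s \<mu> x y" "\<mu> y (d *s x) = d *s \<mu> y x" for d x y
    using cL cR unfolding clinear_vec_def by auto
  have scc: "c *s (d *s v) = d *s (c *s (v::complex^'n))" for d v
    by (simp add: vector_smult_assoc mult.commute)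
  have bll: "bilin_map lam"
    unfolding bilin_map_def clinear_vec_def lam_eq
    by (simp add: matrix_vector_right_distrib vector_scalar_commute vector_add_ldistrib madd msc scc)
  have nd: "Re (herm_form (Mmat lam) x) < 0" if "x \<noteq> 0" for x
    using ndf that unfolding neg_definite_def by blast
  show ?thesis unfolding semisimple_def
  proof (intro allI impI, rule ccontr)
    fix I assume nI: "nilpotent_ideal \<mu> I" and ne: "I \<noteq> {0}"
    obtain T t0 where T: "is_ideal \<mu> T" and sqT: "\<forall>x\<in>T. \<forall>y\<in>T. \<mu> x y = 0"
      and t0: "t0 \<in> T" "t0 \<noteq> 0"
      using annih[OF bl as nI ne] by blast
    have T0: "0 \<in> T" and Tadd: "\<And>x y. x \<in> T \<Longrightarrow> y \<in> T \<Longrightarrow> x + y \<in> T"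
      and Tsc: "\<And>d x. x \<in> T \<Longrightarrow> d *s x \<in> T"
      and Tid: "\<And>a x. x \<in> T \<Longrightarrow> \<mu> a x \<in> T \<and> \<mu> x a \<in> T"
      using T unfolding is_ideal_def by blast+
    define J where "J = (\<lambda>t. g *v t) ` T"
    have sJ: "subspace J"
      unfolding subspace_def
    proof (intro conjI ballI allI)
      show "0 \<in> J" unfolding J_def using T0 by (auto intro!: image_eqI[of _ _ 0])
      fix x y assume "x \<in> J" "y \<in> J"
      then obtain s t where "s \<in> T" "t \<in> T" "x = g *v s" "y = g *v t" unfolding J_def by blast
      then show "x + y \<in> J" unfolding J_def using Tadd
        by (auto simp: matrix_vector_right_distrib[symmetric])
    next
      fix r and x assume "x \<in> J"
      then obtain s where "s \<in> T" "x = g *v s" unfolding J_def by blast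
      then show "r *\<^sub>R x \<in> J" unfolding J_def using Tsc
        by (auto simp: scR_vec vector_scalar_commute[symmetric])
    qed
    have x0: "g *v t0 \<in> J" unfolding J_def using t0 by blast
    have x0nz: "g *v t0 \<noteq> 0" using gi_g[of t0] t0(2) by auto
    have idl: "lam a x \<in> J \<and> lam x a \<in> J" if xJ: "x \<in> J" for a x
    proof -
      obtain t where t: "t \<in> T" "x = g *v t" using xJ unfolding J_def by blast
      have "lam a x = g *v (c *s \<mu> (gi *v a) t)" unfolding lam_eq t(2) gi_g ..
      moreover have "c *s \<mu> (gi *v a) t \<in> T" using Tid[OF t(1)] Tsc by blast
      moreover have "lam x a = g *v (c *s \<mu> t (gi *v a))" unfolding lam_eq t(2) gi_g ..
      moreover have "c *s \<mu> t (gi *v a) \<in> T" using Tid[OF t(1)] Tsc by blast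
      ultimately show ?thesis unfolding J_def by blast
    qed
    have sq: "lam x y = 0" if xyJ: "x \<in> J" "y \<in> J" for x y
    proof -
      obtain s t where "s \<in> T" "t \<in> T" "x = g *v s" "y = g *v t" using xyJ unfolding J_def by blast
      then show ?thesis unfolding lam_eq using sqT by (simp add: gi_g)
    qed
    show False by (rule core[OF bll nd sJ x0 x0nz idl sq])
  qed
qed

end
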